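(* Let $n,m,k,l$ be non-negative integers with $m,k\le n$ and $m+k-n\le l\le\min(m,k)$. Then $p(x\mid n,m,k,l)=0$ for every integer $x$ with $\min(m,\,n-m,\,k)<x\le\lfloor n/2\rfloor$.
   Context: Let $M:=m-l$, $N:=n-m-k+l$. Let $\mathbb{C}^2$ have orthonormal basis $|0\rangle,|1\rangle$ and give $(\mathbb{C}^2)^{\otimes n}$ the induced Hermitian inner product. Define $|\Xi_{n,m|k,l}\rangle:=|1\rangle^{\otimes l}\otimes|0\rangle^{\otimes(k-l)}\otimes\binom{M+N}{M}^{-1/2}\sum_{I}|I\rangle$, the sum over all $I\in\{0,1\}^{n-k}$ with exactly $M$ ones (where $|i_1\cdots i_r\rangle=|i_1\rangle\otimes\cdots\otimes|i_r\rangle$). $\mathfrak S_n$ acts on $(\mathbb{C}^2)^{\otimes n}$ by permuting tensor factors. For $0\le x\le\lfloor n/2\rfloor$, $\mathsf P_{(n-x,x)}$ is the orthogonal projection onto the isotypic component of the irreducible $\mathfrak S_n$-representation labelled by the partition $(n-x,x)$, and $p(x\mid n,m,k,l):=\langle\Xi_{n,m|k,l}|\mathsf P_{(n-x,x)}|\Xi_{n,m|k,l}\rangle$. *)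

theory Defs
  imports Complex_Main "HOL-Combinatorics.Permutations"
begin

text \<open>Vectors of (C^2)^(tensor n) are represented as functions from bit strings
  (bool lists, True = |1>, False = |0>) to complex amplitudes; only strings of
  length n are relevant.\<close>

definition strings :: "nat \<Rightarrow> bool list set" where
  "strings n = {b. length b = n}"

definition tvecs :: "nat \<Rightarrow> (bool list \<Rightarrow> complex) set" where
  "tvecs n = {\<psi>. \<forall>b. length b \<noteq> n \<longrightarrow> \<psi> b = 0}"

definition tinner :: "nat \<Rightarrow> (bool list \<Rightarrow> complex) \<Rightarrow> (bool list \<Rightarrow> complex) \<Rightarrow> complex" where
  "tinner n \<phi> \<psi> = (\<Sum>b\<in>strings n. cnj (\<phi> b) * \<psi> b)"

text \<open>Action of a permutation of the tensor factors {0..<n}; this is a left action: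
  act n s (act n t \<psi>) = act n (s o t) \<psi>.\<close>
definition act :: "nat \<Rightarrow> (nat \<Rightarrow> nat) \<Rightarrow> (bool list \<Rightarrow> complex) \<Rightarrow> (bool list \<Rightarrow> complex)" where
  "act n s \<psi> = (\<lambda>b. if length b = n then \<psi> (map (\<lambda>i. b ! s i) [0..<n]) else 0)"

definition perms :: "nat \<Rightarrow> (nat \<Rightarrow> nat) set" where
  "perms n = {s. s permutes {..<n}}"

text \<open>Canonical Young tableau of shape (n-x, x): first row 0..n-x-1, second row
  n-x..n-1; column of entry i.\<close>
definition tab_col :: "nat \<Rightarrow> nat \<Rightarrow> nat \<Rightarrow> nat" where
  "tab_col n x i = (if i < n - x then i else i - (n - x))"

definition row_group :: "nat \<Rightarrow> nat \<Rightarrow> (nat \<Rightarrow> nat) set" where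
  "row_group n x = {s \<in> perms n. s ` {..<n - x} = {..<n - x}}"

definition col_group :: "nat \<Rightarrow> nat \<Rightarrow> (nat \<Rightarrow> nat) set" where
  "col_group n x = {s \<in> perms n. \<forall>i<n. tab_col n x (s i) = tab_col n x i}"

text \<open>Action of the Young symmetrizer c = b a, a = sum of row permutations,
  b = signed sum of column permutations.\<close>
definition young_sym :: "nat \<Rightarrow> nat \<Rightarrow> (bool list \<Rightarrow> complex) \<Rightarrow> (bool list \<Rightarrow> complex)" where
  "young_sym n x \<psi> = (\<lambda>b. \<Sum>q\<in>col_group n x. of_int (sign q) *
      act n q (\<lambda>c. \<Sum>p\<in>row_group n x. act n p \<psi> c) b)"

text \<open>Isotypic component of the irrep (n-x,x): the image of (C^2)^(tensor n) under the
  two-sided ideal of C[S_n] generated by the Young symmetrizer, i.e. the span of all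
  s (c v) (linear combinations are absorbed into v since c is linear).\<close>
definition isotypic :: "nat \<Rightarrow> nat \<Rightarrow> (bool list \<Rightarrow> complex) set" where
  "isotypic n x = {\<phi>. \<exists>\<Psi>. (\<forall>s. \<Psi> s \<in> tvecs n) \<and>
      \<phi> = (\<lambda>b. \<Sum>s\<in>perms n. act n s (young_sym n x (\<Psi> s)) b)}"

definition proj_iso :: "nat \<Rightarrow> nat \<Rightarrow> (bool list \<Rightarrow> complex) \<Rightarrow> (bool list \<Rightarrow> complex)" where
  "proj_iso n x \<psi> = (THE w. w \<in> isotypic n x \<and>
      (\<forall>\<phi>\<in>isotypic n x. tinner n \<phi> (\<lambda>b. \<psi> b - w b) = 0))"

text \<open>The state Xi_{n,m|k,l}, with M = m - l, N = n - m - k + l.\<close>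
definition Xi :: "nat \<Rightarrow> nat \<Rightarrow> nat \<Rightarrow> nat \<Rightarrow> bool list \<Rightarrow> complex" where
  "Xi n m k l = (\<lambda>b. if length b = n \<and> take l b = replicate l True
       \<and> take (k - l) (drop l b) = replicate (k - l) False
       \<and> count_list (drop k b) True = m - l
     then complex_of_real (1 / sqrt (real ((m - l + (n - m - k + l)) choose (m - l))))
     else 0)"

definition pxi :: "nat \<Rightarrow> nat \<Rightarrow> nat \<Rightarrow> nat \<Rightarrow> nat \<Rightarrow> complex" where
  "pxi x n m k l = tinner n (Xi n m k l) (proj_iso n x (Xi n m k l))"

end

theory Submission
  imports Defs
begin

definition pm :: "nat \<Rightarrow> bool list \<Rightarrow> (nat \<Rightarrow> nat) \<Rightarrow> bool list" where
  "pm n b s = map (\<lambda>i. b ! s i) [0..<n]"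

lemma pm_len[simp]: "length (pm n b s) = n" by (simp add: pm_def)
lemma pm_nth[simp]: "i < n \<Longrightarrow> pm n b s ! i = b ! s i" by (simp add: pm_def)

lemma act_pm: "act n s \<psi> b = (if length b = n then \<psi> (pm n b s) else 0)"
  by (simp add: act_def pm_def)

lemma finite_strings[simp]: "finite (strings n)"
proof -
  have "strings n = {xs. set xs \<subseteq> (UNIV::bool set) \<and> length xs = n}" by (auto simp: strings_def)
  then show ?thesis using finite_lists_length_eq[of "UNIV::bool set" n] by simp
qed

lemma cancel_sum:
  fixes f :: "'a \<Rightarrow> complex"
  assumes "finite A" "\<And>a. a \<in> A \<Longrightarrow> h a \<in> A" "\<And>a. a \<in> A \<Longrightarrow> h (h a) = a"
    "\<And>a. a \<in> A \<Longrightarrow> f (h a) = - f a"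
  shows "sum f A = 0"
proof -
  have b: "bij_betw h A A" by (rule bij_betw_byWitness[where f'=h]) (use assms in auto)
  have "sum f A = sum (\<lambda>a. f (h a)) A" using sum.reindex_bij_betw[OF b, of f] by simp
  also have "\<dots> = - sum f A" using assms(4) by (simp add: sum_negf)
  finally show ?thesis by simp
qed

lemma finite_col[simp]: "finite (col_group n x)"
proof -
  have "col_group n x \<subseteq> {s. s permutes {..<n}}" by (auto simp: col_group_def perms_def)
  then show ?thesis using finite_permutations[of "{..<n}"] finite_subset by auto
qed

lemma finite_perms[simp]: "finite (perms n)"
  using finite_permutations[of "{..<n}"] by (simp add: perms_def)

lemma transp_col:
  assumes "i < n" "j < n" "tab_col n x i = tab_col n x j"
  shows "transpose i j \<in> col_group n x"
  using assms by (auto simp: col_group_def perms_def intro!: permutes_swap_id simp: transpose_def)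

lemma col_comp:
  assumes "t \<in> col_group n x" "q \<in> col_group n x"
  shows "t \<circ> q \<in> col_group n x"
proof -
  have qp: "q permutes {..<n}" using assms by (auto simp: col_group_def perms_def)
  have "q i < n" if "i < n" for i using permutes_in_image[OF qp] that by auto
  then show ?thesis using assms
    by (auto simp: col_group_def perms_def intro: permutes_compose)
qed

lemma col_perm: "q \<in> col_group n x \<Longrightarrow> permutation q"
  by (auto simp: col_group_def perms_def permutation_permutes)

lemma sign_tq:
  assumes "q \<in> col_group n x" "i \<noteq> j"
  shows "sign (transpose i j \<circ> q) = - sign q"
  using assms col_perm sign_compose[of "transpose i j" q] sign_swap_id[of i j]
  by (simp add: permutation_swap_id)

lemma transp_invol: "transpose i j \<circ> (transpose i j \<circ> q) = q"
  by (simp add: comp_assoc[symmetric])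


lemma take_repl: "l \<le> length b \<Longrightarrow> (take l b = replicate l v) = (\<forall>r<l. b ! r = v)"
  by (auto simp: list_eq_iff_nth_eq)

lemma take_drop_repl: "k \<le> length b \<Longrightarrow> l \<le> k \<Longrightarrow>
   (take (k - l) (drop l b) = replicate (k - l) v) = (\<forall>r. l \<le> r \<and> r < k \<longrightarrow> b ! r = v)"
proof -
  assume a: "k \<le> length b" "l \<le> k"
  have "(take (k - l) (drop l b) = replicate (k - l) v) = (\<forall>i<k - l. b ! (l + i) = v)"
    using a by (auto simp: list_eq_iff_nth_eq)
  also have "\<dots> = (\<forall>r. l \<le> r \<and> r < k \<longrightarrow> b ! r = v)"
  proof
    assume h: "\<forall>i<k - l. b ! (l + i) = v"
    show "\<forall>r. l \<le> r \<and> r < k \<longrightarrow> b ! r = v"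
    proof (intro allI impI)
      fix r assume r: "l \<le> r \<and> r < k"
      then have "r - l < k - l" by linarith
      then have "b ! (l + (r - l)) = v" using h by blast
      then show "b ! r = v" using r by simp
    qed
  qed (use a in auto)
  finally show ?thesis .
qed

lemma count_card: "count_list xs True = card {i. i < length xs \<and> xs ! i}"
  by (simp add: count_list_eq_length_filter length_filter_conv_card eq_commute)

lemma count_drop: "length b = n \<Longrightarrow> k \<le> n \<Longrightarrow>
   count_list (drop k b) True = card {r. k \<le> r \<and> r < n \<and> b ! r}"
proof -
  assume a: "length b = n" "k \<le> n"
  have "{r. k \<le> r \<and> r < n \<and> b ! r} = (\<lambda>i. i + k) ` {i. i < length (drop k b) \<and> drop k b ! i}"
  proof (rule set_eqI, rule iffI)
    fix r assume "r \<in> {r. k \<le> r \<and> r < n \<and> b ! r}"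
    then show "r \<in> (\<lambda>i. i + k) ` {i. i < length (drop k b) \<and> drop k b ! i}"
      using a by (auto simp: image_iff intro!: exI[where x="r - k"])
  qed (use a in \<open>auto simp: add.commute\<close>)
  moreover have "inj (\<lambda>i::nat. i + k)" by (simp add: inj_def)
  ultimately show ?thesis by (simp add: count_card card_image inj_on_def)
qed

lemma Xi_char:
  assumes "l \<le> k" "k \<le> n"
  shows "Xi n m k l b = (if length b = n \<and> (\<forall>r<l. b ! r) \<and> (\<forall>r. l \<le> r \<and> r < k \<longrightarrow> \<not> b ! r)
     \<and> card {r. k \<le> r \<and> r < n \<and> b ! r} = m - l
     then complex_of_real (1 / sqrt (real ((m - l + (n - m - k + l)) choose (m - l)))) else 0)"
proof (cases "length b = n")
  case True
  have e1: "(take l b = replicate l True) = (\<forall>r<l. b ! r)" using True assms by (simp add: take_repl)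
  have e2: "(take (k - l) (drop l b) = replicate (k - l) False) = (\<forall>r. l \<le> r \<and> r < k \<longrightarrow> \<not> b ! r)"
    using True assms take_drop_repl[of k b l False] by simp
  have e3: "count_list (drop k b) True = card {r. k \<le> r \<and> r < n \<and> b ! r}" using True assms count_drop by simp
  show ?thesis unfolding Xi_def e1 e2 e3 by simp
qed (simp add: Xi_def)

lemma Xi_weight:
  assumes "l \<le> k" "k \<le> n" "l \<le> m" "Xi n m k l b \<noteq> 0"
  shows "length b = n" "card {r. r < n \<and> b ! r} = m"
proof -
  have h: "length b = n" "\<forall>r<l. b ! r" "\<forall>r. l \<le> r \<and> r < k \<longrightarrow> \<not> b ! r"
     "card {r. k \<le> r \<and> r < n \<and> b ! r} = m - l"
    using assms(4) Xi_char[OF assms(1,2), of m b] by (auto split: if_splits)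
  show "length b = n" by fact
  have "{r. r < n \<and> b ! r} = {..<l} \<union> {r. k \<le> r \<and> r < n \<and> b ! r}"
  proof (rule set_eqI)
    fix r show "r \<in> {r. r < n \<and> b ! r} \<longleftrightarrow> r \<in> {..<l} \<union> {r. k \<le> r \<and> r < n \<and> b ! r}"
      using h(2,3) assms(1,2) by (cases "r < l"; cases "r < k") auto
  qed
  moreover have "{..<l} \<inter> {r. k \<le> r \<and> r < n \<and> b ! r} = {}" using assms by auto
  moreover have "finite {r. k \<le> r \<and> r < n \<and> b ! r}" by simp
  ultimately have "card {r. r < n \<and> b ! r} = l + (m - l)"
    by (simp add: card_Un_disjoint h(4))
  then show "card {r. r < n \<and> b ! r} = m" using assms by simp
qed


lemma card_invol:
  assumes "\<And>r. \<sigma> (\<sigma> r) = r" "\<And>r. r \<in> S \<Longrightarrow> \<sigma> r \<in> S"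
  shows "card {r\<in>S. P (\<sigma> r)} = card {r\<in>S. P r}"
proof -
  have i: "inj \<sigma>" by (metis assms(1) injI)
  have "\<sigma> ` {r\<in>S. P (\<sigma> r)} = {r\<in>S. P r}"
  proof (rule set_eqI, rule iffI)
    fix r assume "r \<in> {r\<in>S. P r}"
    then show "r \<in> \<sigma> ` {r\<in>S. P (\<sigma> r)}" by (rule_tac image_eqI[where x="\<sigma> r"]) (use assms in auto)
  qed (use assms in auto)
  then show ?thesis using card_image[of \<sigma>] i by (metis inj_on_subset subset_UNIV)
qed

lemma card_perm:
  assumes "s permutes {..<n}"
  shows "card {r. r < n \<and> b ! s r} = card {r. r < n \<and> b ! r}"
proof -
  have i: "inj s" using assms permutes_inj by blast
  have "s ` {r. r < n \<and> b ! s r} = {r. r < n \<and> b ! r}"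
  proof (rule set_eqI, rule iffI)
    fix r assume r: "r \<in> {r. r < n \<and> b ! r}"
    have "inv s r < n" using permutes_in_image[OF permutes_inv[OF assms]] r by auto
    then show "r \<in> s ` {r. r < n \<and> b ! s r}" using assms r
      by (auto simp: image_iff permutes_inverses(1) intro!: exI[where x="inv s r"])
  qed (use assms in \<open>auto, metis lessThan_iff permutes_in_image\<close>)
  then show ?thesis using card_image[of s] i by (metis inj_on_subset subset_UNIV)
qed

lemma reindex_col:
  assumes "t \<in> col_group n x" "\<And>q::nat\<Rightarrow>nat. t \<circ> (t \<circ> q) = q"
  shows "sum g (col_group n x) = sum (\<lambda>q. g (t \<circ> q)) (col_group n x)"
proof -
  have b: "bij_betw (\<lambda>q. t \<circ> q) (col_group n x) (col_group n x)"
    by (rule bij_betw_byWitness[where f'="\<lambda>q. t \<circ> q"]) (use assms col_comp in auto)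
  show ?thesis using sum.reindex_bij_betw[OF b, of g] by simp
qed

lemma col_lt: "q \<in> col_group n x \<Longrightarrow> r < n \<Longrightarrow> q r < n"
  by (auto simp: col_group_def perms_def) (metis lessThan_iff permutes_in_image)

lemma case1:
  fixes u :: "bool list \<Rightarrow> complex"
  assumes "length g = n" "card {r. r < n \<and> g ! r} = m" "m < x \<or> n - m < x" "x \<le> n div 2"
  shows "(\<Sum>q\<in>col_group n x. of_int (sign q) * u (pm n g q)) = 0"
proof -
  have xn: "x \<le> n - x" using assms(4) by linarith
  have "\<exists>i<x. g ! i = g ! (n - x + i)"
  proof (rule ccontr)
    assume "\<not> ?thesis"
    then have ne: "\<And>i. i < x \<Longrightarrow> g ! (n - x + i) = (\<not> g ! i)" by auto
    define A where "A = {i. i < x \<and> g ! i}"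
    define B where "B = {i. i < x \<and> \<not> g ! i}"
    have AB: "card A + card B = x"
    proof -
      have "A \<union> B = {..<x}" "A \<inter> B = {}" by (auto simp: A_def B_def)
      then show ?thesis using card_Un_disjoint[of A B] by (simp add: A_def B_def)
    qed
    have sh: "inj (\<lambda>i. n - x + i)" by (simp add: inj_def)
    have d1: "A \<inter> (\<lambda>i. n - x + i) ` B = {}" "B \<inter> (\<lambda>i. n - x + i) ` A = {}"
      using xn by (auto simp: A_def B_def)
    have c1: "card ((\<lambda>i. n - x + i) ` B) = card B" "card ((\<lambda>i. n - x + i) ` A) = card A"
      using sh by (auto intro!: card_image simp: inj_on_def)
    have fA: "finite A" "finite B" by (auto simp: A_def B_def)
    have f1: "card (A \<union> (\<lambda>i. n - x + i) ` B) = x"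
      using AB d1 c1 card_Un_disjoint[of A "(\<lambda>i. n - x + i) ` B"] fA by simp
    have f2: "card (B \<union> (\<lambda>i. n - x + i) ` A) = x"
      using AB d1 c1 card_Un_disjoint[of B "(\<lambda>i. n - x + i) ` A"] fA by simp
    have s1: "A \<union> (\<lambda>i. n - x + i) ` B \<subseteq> {r. r < n \<and> g ! r}"
      using ne xn by (auto simp: A_def B_def)
    have s2: "B \<union> (\<lambda>i. n - x + i) ` A \<subseteq> {r. r < n \<and> \<not> g ! r}"
      using ne xn by (auto simp: A_def B_def)
    have "x \<le> m" using card_mono[OF _ s1] f1 assms(2) by simp
    moreover have "x \<le> card {r. r < n \<and> \<not> g ! r}" using card_mono[OF _ s2] f2 by simp
    moreover have "card {r. r < n \<and> \<not> g ! r} = n - m"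
    proof -
      have "{r. r < n \<and> \<not> g ! r} = {..<n} - {r. r < n \<and> g ! r}" by auto
      moreover have "card ({..<n} - {r. r < n \<and> g ! r}) = card {..<n} - card {r. r < n \<and> g ! r}"
        by (rule card_Diff_subset) auto
      ultimately show ?thesis using assms(2) by simp
    qed
    ultimately show False using assms(3) by linarith
  qed
  then obtain i where i: "i < x" "g ! i = g ! (n - x + i)" by blast
  define t where "t = transpose i (n - x + i)"
  have tc: "tab_col n x i = tab_col n x (n - x + i)" using i xn by (auto simp: tab_col_def)
  have tC: "t \<in> col_group n x" unfolding t_def by (rule transp_col) (use i xn tc in auto)
  have inv: "\<And>q. t \<circ> (t \<circ> q) = q" by (simp add: t_def transp_invol)
  show ?thesis
  proof (rule cancel_sum[where h="\<lambda>q. t \<circ> q"])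
    fix q assume q: "q \<in> col_group n x"
    have "pm n g (t \<circ> q) = pm n g q"
      using i by (intro nth_equalityI) (auto simp: t_def transpose_def)
    then show "of_int (sign (t \<circ> q)) * u (pm n g (t \<circ> q)) = - (of_int (sign q) * u (pm n g q))"
      using sign_tq[OF q, of i "n - x + i"] i xn by (simp add: t_def)
  qed (use tC inv col_comp in auto)
qed


lemma case2:
  fixes u :: "bool list \<Rightarrow> complex"
  assumes "l \<le> k" "k \<le> n" "k < x" "x \<le> n div 2" "s permutes {..<n}"
  shows "(\<Sum>b\<in>strings n. cnj (Xi n m k l b) *
     (\<Sum>q\<in>col_group n x. of_int (sign q) * u (pm n (pm n b s) q))) = 0"
proof -
  have xn: "x \<le> n - x" using assms(4) by linarith
  have si: "inj s" using assms(5) permutes_inj by blast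
  have slt: "\<And>r. r < n \<Longrightarrow> s r < n" using assms(5) by (metis lessThan_iff permutes_in_image)
  define P where "P = {r. r < n \<and> k \<le> s r}"
  have "s ` P = {k..<n}"
  proof (rule set_eqI, rule iffI)
    fix r assume r: "r \<in> {k..<n}"
    have "inv s r < n" using permutes_in_image[OF permutes_inv[OF assms(5)]] r by auto
    then show "r \<in> s ` P" using r assms(5)
      by (auto simp: P_def image_iff permutes_inverses(1) intro!: exI[where x="inv s r"])
  qed (use slt in \<open>auto simp: P_def\<close>)
  then have cP: "card P = n - k" using card_image[of s P] si by (metis card_atLeastLessThan inj_on_subset subset_UNIV)
  have "\<not> inj_on (tab_col n x) P"
  proof
    assume inj: "inj_on (tab_col n x) P"
    have "tab_col n x ` P \<subseteq> {..<n - x}" using xn by (auto simp: P_def tab_col_def)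
    then have "card (tab_col n x ` P) \<le> n - x" by (metis card_lessThan card_mono finite_lessThan)
    then show False using card_image[OF inj] cP assms by linarith
  qed
  then obtain i j where ij: "i \<in> P" "j \<in> P" "i \<noteq> j" "tab_col n x i = tab_col n x j"
    unfolding inj_on_def by blast
  define \<sigma> where "\<sigma> = transpose (s i) (s j)"
  define t where "t = transpose i j"
  have key: "\<And>y. \<sigma> (s (t y)) = s y"
    using si ij(3) by (auto simp: \<sigma>_def t_def transpose_def inj_eq)
  have sij: "k \<le> s i" "k \<le> s j" "s i < n" "s j < n" "i < n" "j < n" using ij(1,2) slt by (auto simp: P_def)
  have sfix: "\<And>r. r < k \<Longrightarrow> \<sigma> r = r" using sij by (auto simp: \<sigma>_def transpose_def)
  have slt2: "\<And>r. r < n \<Longrightarrow> \<sigma> r < n" using sij by (auto simp: \<sigma>_def transpose_def)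
  have sinv: "\<And>r. \<sigma> (\<sigma> r) = r" by (simp add: \<sigma>_def)
  have tC: "t \<in> col_group n x" unfolding t_def by (rule transp_col) (use sij ij in auto)
  have tinv: "\<And>q::nat\<Rightarrow>nat. t \<circ> (t \<circ> q) = q" by (simp add: t_def transp_invol)
  show ?thesis
  proof (rule cancel_sum[where h="\<lambda>b. pm n b \<sigma>"])
    fix b assume b: "b \<in> strings n"
    then have lb: "length b = n" by (simp add: strings_def)
    show "pm n b \<sigma> \<in> strings n" by (simp add: strings_def)
    show "pm n (pm n b \<sigma>) \<sigma> = b" using lb slt2 sinv by (intro nth_equalityI) auto
    have X: "Xi n m k l (pm n b \<sigma>) = Xi n m k l b"
    proof -
      have c1: "(\<forall>r<l. pm n b \<sigma> ! r) = (\<forall>r<l. b ! r)" using sfix assms(1,2) by auto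
      have c2: "(\<forall>r. l \<le> r \<and> r < k \<longrightarrow> \<not> pm n b \<sigma> ! r) = (\<forall>r. l \<le> r \<and> r < k \<longrightarrow> \<not> b ! r)"
        using sfix assms(1,2) by auto
      have "{r. k \<le> r \<and> r < n \<and> pm n b \<sigma> ! r} = {r \<in> {r. k \<le> r \<and> r < n}. b ! (\<sigma> r)}" by auto
      also have "card \<dots> = card {r \<in> {r. k \<le> r \<and> r < n}. b ! r}"
        by (rule card_invol) (use sinv sij in \<open>auto simp: \<sigma>_def transpose_def\<close>)
      also have "{r \<in> {r. k \<le> r \<and> r < n}. b ! r} = {r. k \<le> r \<and> r < n \<and> b ! r}" by auto
      finally have c3: "card {r. k \<le> r \<and> r < n \<and> pm n b \<sigma> ! r} = card {r. k \<le> r \<and> r < n \<and> b ! r}" .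
      show ?thesis unfolding Xi_char[OF assms(1,2)] using c1 c2 c3 lb by simp
    qed
    have "(\<Sum>q\<in>col_group n x. of_int (sign q) * u (pm n (pm n (pm n b \<sigma>) s) q))
        = (\<Sum>q\<in>col_group n x. of_int (sign (t \<circ> q)) * u (pm n (pm n (pm n b \<sigma>) s) (t \<circ> q)))"
      by (rule reindex_col[OF tC tinv])
    also have "\<dots> = (\<Sum>q\<in>col_group n x. - (of_int (sign q) * u (pm n (pm n b s) q)))"
    proof (rule sum.cong[OF refl])
      fix q assume q: "q \<in> col_group n x"
      have "pm n (pm n (pm n b \<sigma>) s) (t \<circ> q) = pm n (pm n b s) q"
      proof (rule nth_equalityI)
        fix r assume "r < length (pm n (pm n (pm n b \<sigma>) s) (t \<circ> q))"
        then have r: "r < n" by simp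
        have a1: "q r < n" using col_lt[OF q r] .
        have a2: "t (q r) < n" using col_lt[OF tC a1] .
        have a3: "s (t (q r)) < n" using slt[OF a2] .
        show "pm n (pm n (pm n b \<sigma>) s) (t \<circ> q) ! r = pm n (pm n b s) q ! r"
          using r a1 a2 a3 key by simp
      qed simp
      then show "of_int (sign (t \<circ> q)) * u (pm n (pm n (pm n b \<sigma>) s) (t \<circ> q))
          = - (of_int (sign q) * u (pm n (pm n b s) q))"
        using sign_tq[OF q ij(3)] by (simp add: t_def)
    qed
    finally show "cnj (Xi n m k l (pm n b \<sigma>)) * (\<Sum>q\<in>col_group n x. of_int (sign q) * u (pm n (pm n (pm n b \<sigma>) s) q))
       = - (cnj (Xi n m k l b) * (\<Sum>q\<in>col_group n x. of_int (sign q) * u (pm n (pm n b s) q)))"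
      using X by (simp add: sum_negf)
  qed simp
qed


lemma term0:
  assumes "m \<le> n" "k \<le> n" "l \<le> min m k"
    and "min (min m (n - m)) k < x" and "x \<le> n div 2" and "s \<in> perms n"
  shows "tinner n (Xi n m k l) (act n s (young_sym n x \<Psi>)) = 0"
proof -
  define u where "u = (\<lambda>c. \<Sum>p\<in>row_group n x. act n p \<Psi> c)"
  have sp: "s permutes {..<n}" using assms(6) by (simp add: perms_def)
  have lk: "l \<le> k" "l \<le> m" using assms(3) by auto
  have e: "act n s (young_sym n x \<Psi>) b = (\<Sum>q\<in>col_group n x. of_int (sign q) * u (pm n (pm n b s) q))"
    if "b \<in> strings n" for b
    using that by (simp add: act_pm young_sym_def u_def strings_def)
  have "tinner n (Xi n m k l) (act n s (young_sym n x \<Psi>)) =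
     (\<Sum>b\<in>strings n. cnj (Xi n m k l b) * (\<Sum>q\<in>col_group n x. of_int (sign q) * u (pm n (pm n b s) q)))"
    unfolding tinner_def by (rule sum.cong[OF refl]) (simp add: e)
  also have "\<dots> = 0"
  proof (cases "m < x \<or> n - m < x")
    case True
    show ?thesis
    proof (rule sum.neutral, rule ballI)
      fix b assume b: "b \<in> strings n"
      show "cnj (Xi n m k l b) * (\<Sum>q\<in>col_group n x. of_int (sign q) * u (pm n (pm n b s) q)) = 0"
      proof (cases "Xi n m k l b = 0")
        case False
        have w: "length b = n" "card {r. r < n \<and> b ! r} = m"
          using Xi_weight[OF lk(1) assms(2) lk(2) False] by auto
        have "{r. r < n \<and> pm n b s ! r} = {r. r < n \<and> b ! s r}" by auto
        then have "card {r. r < n \<and> pm n b s ! r} = m"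
          using card_perm[OF sp, of b] w by simp
        then have "(\<Sum>q\<in>col_group n x. of_int (sign q) * u (pm n (pm n b s) q)) = 0"
          using case1[of "pm n b s" n m x u] True assms(5) by simp
        then show ?thesis by simp
      qed simp
    qed
  next
    case False
    then have "k < x" using assms(4) by linarith
    then show ?thesis using case2[OF lk(1) assms(2) _ assms(5) sp] by simp
  qed
  finally show ?thesis .
qed

lemma tinner_cnj: "tinner n \<phi> \<psi> = cnj (tinner n \<psi> \<phi>)"
  by (simp add: tinner_def mult.commute)

lemma orth:
  assumes "m \<le> n" "k \<le> n" "l \<le> min m k"
    and "min (min m (n - m)) k < x" and "x \<le> n div 2" and "\<phi> \<in> isotypic n x"
  shows "tinner n (Xi n m k l) \<phi> = 0"
proof -
  obtain \<Psi> where \<phi>: "\<phi> = (\<lambda>b. \<Sum>s\<in>perms n. act n s (young_sym n x (\<Psi> s)) b)"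
    using assms(6) by (auto simp: isotypic_def)
  have "tinner n (Xi n m k l) \<phi> = (\<Sum>s\<in>perms n. tinner n (Xi n m k l) (act n s (young_sym n x (\<Psi> s))))"
    unfolding \<phi> tinner_def by (simp add: sum_distrib_left sum.swap[of _ "strings n"])
  also have "\<dots> = 0" using term0[OF assms(1-5)] by simp
  finally show ?thesis .
qed

lemma iso_zero_outside: "w \<in> isotypic n x \<Longrightarrow> length b \<noteq> n \<Longrightarrow> w b = 0"
  by (auto simp: isotypic_def act_def)

lemma tinner_self_zero:
  assumes "tinner n w w = 0" "b \<in> strings n"
  shows "w b = 0"
proof -
  have "tinner n w w = (\<Sum>b\<in>strings n. complex_of_real ((cmod (w b))\<^sup>2))"
    unfolding tinner_def by (rule sum.cong[OF refl]) (metis complex_norm_square mult.commute)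
  also have "\<dots> = complex_of_real (\<Sum>b\<in>strings n. (cmod (w b))\<^sup>2)" by (simp only: of_real_sum)
  finally have "tinner n w w = complex_of_real (\<Sum>b\<in>strings n. (cmod (w b))\<^sup>2)" .
  then have "(\<Sum>b\<in>strings n. (cmod (w b))\<^sup>2) = 0" using assms(1) by (metis of_real_eq_0_iff)
  then have "\<forall>b\<in>strings n. (cmod (w b))\<^sup>2 = 0" by (subst (asm) sum_nonneg_eq_0_iff) auto
  then show ?thesis using assms(2) by simp
qed

theorem corollary4p11:
  fixes n m k l x :: nat
  assumes "m \<le> n" and "k \<le> n"
    and "m + k \<le> n + l" and "l \<le> min m k"
    and "min (min m (n - m)) k < x" and "x \<le> n div 2"
  shows "pxi x n m k l = 0"
proof -
  let ?X = "Xi n m k l"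
  have zi: "(\<lambda>b. 0) \<in> isotypic n x"
    unfolding isotypic_def
    by (rule CollectI, rule exI[where x="\<lambda>s b. 0"]) (auto simp: tvecs_def young_sym_def act_def)
  have "proj_iso n x ?X = (\<lambda>b. 0)"
    unfolding proj_iso_def
  proof (rule the_equality)
    show "(\<lambda>b. 0) \<in> isotypic n x \<and> (\<forall>\<phi>\<in>isotypic n x. tinner n \<phi> (\<lambda>b. ?X b - 0) = 0)"
    proof (intro conjI ballI)
      fix \<phi> assume p: "\<phi> \<in> isotypic n x"
      have "tinner n \<phi> (\<lambda>b. ?X b - 0) = tinner n \<phi> ?X" by simp
      also have "\<dots> = cnj (tinner n ?X \<phi>)" by (rule tinner_cnj)
      also have "\<dots> = 0" using orth[OF assms(1,2,4,5,6) p] by simp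
      finally show "tinner n \<phi> (\<lambda>b. ?X b - 0) = 0" .
    qed (rule zi)
  next
    fix w assume w: "w \<in> isotypic n x \<and> (\<forall>\<phi>\<in>isotypic n x. tinner n \<phi> (\<lambda>b. ?X b - w b) = 0)"
    then have "tinner n w (\<lambda>b. ?X b - w b) = 0" by blast
    moreover have "tinner n w (\<lambda>b. ?X b - w b) = tinner n w ?X - tinner n w w"
      by (simp add: tinner_def right_diff_distrib sum_subtractf)
    moreover have "tinner n w ?X = 0" using orth[OF assms(1,2,4,5,6)] w tinner_cnj by (metis complex_cnj_zero)
    ultimately have "tinner n w w = 0" by simp
    show "w = (\<lambda>b. 0)"
    proof (rule ext)
      fix b show "w b = 0"
      proof (cases "length b = n")
        case True
        then show ?thesis using tinner_self_zero[OF \<open>tinner n w w = 0\<close>] by (simp add: strings_def)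
      next
        case False
        then show ?thesis using iso_zero_outside w by blast
      qed
    qed
  qed
  then show ?thesis by (simp add: pxi_def tinner_def)
qed

end
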